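(* For $1\le i\le k$ let $G_i$ be an $r_i$-regular graph with $n_i$ vertices, let $r=r_1\cdots r_k$, and suppose $\gcd(n_i, r/r_i)=1$ for every $i$. If each $G_i$ is $\mathbb{Z}_{n_i}$-distance antimagic, then the direct product $G_1\times\cdots\times G_k$ is $\mathbb{Z}_{n_1\cdots n_k}$-distance antimagic.
   Context: The direct product $G_1\times\cdots\times G_k$ has vertex set $V(G_1)\times\cdots\times V(G_k)$, with $(x_1,\ldots,x_k)$ and $(y_1,\ldots,y_k)$ adjacent iff $x_iy_i\in E(G_i)$ for every $i$. For a graph $G$ with $n$ vertices, a $\mathbb{Z}_n$-distance antimagic labelling is a bijection $f:V(G)\to\mathbb{Z}_n$ such that the weights $w_f(x)=\sum_{y\in N(x)} f(y)$ (mod $n$, $N(x)$ the open neighbourhood) are pairwise distinct; $G$ is $\mathbb{Z}_n$-distance antimagic if such a labelling exists. *)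

theory Defs
  imports Main "HOL-Library.FuncSet"
begin

definition simple_graph :: "'a set \<Rightarrow> ('a \<Rightarrow> 'a \<Rightarrow> bool) \<Rightarrow> bool" where
  "simple_graph V E \<longleftrightarrow> finite V \<and> (\<forall>x y. E x y \<longrightarrow> x \<in> V \<and> y \<in> V)
     \<and> (\<forall>x y. E x y \<longrightarrow> E y x) \<and> (\<forall>x. \<not> E x x)"

definition nbhd :: "'a set \<Rightarrow> ('a \<Rightarrow> 'a \<Rightarrow> bool) \<Rightarrow> 'a \<Rightarrow> 'a set" where
  "nbhd V E x = {y \<in> V. E x y}"

definition regular :: "'a set \<Rightarrow> ('a \<Rightarrow> 'a \<Rightarrow> bool) \<Rightarrow> nat \<Rightarrow> bool" where
  "regular V E r \<longleftrightarrow> (\<forall>x\<in>V. card (nbhd V E x) = r)"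

definition Zn_distance_antimagic :: "'a set \<Rightarrow> ('a \<Rightarrow> 'a \<Rightarrow> bool) \<Rightarrow> bool" where
  "Zn_distance_antimagic V E \<longleftrightarrow>
     (\<exists>f. bij_betw f V {0..<card V} \<and>
          inj_on (\<lambda>x. (\<Sum>y\<in>nbhd V E x. f y) mod card V) V)"

definition dprod_V :: "nat \<Rightarrow> (nat \<Rightarrow> 'a set) \<Rightarrow> (nat \<Rightarrow> 'a) set" where
  "dprod_V k V = PiE {..<k} V"

definition dprod_E :: "nat \<Rightarrow> (nat \<Rightarrow> 'a \<Rightarrow> 'a \<Rightarrow> bool) \<Rightarrow> (nat \<Rightarrow> 'a) \<Rightarrow> (nat \<Rightarrow> 'a) \<Rightarrow> bool" where
  "dprod_E k E x y \<longleftrightarrow> x \<in> PiE {..<k} (\<lambda>_. UNIV) \<and> y \<in> PiE {..<k} (\<lambda>_. UNIV)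
      \<and> (\<forall>i<k. E i (x i) (y i))"

end

theory Submission
  imports Defs "HOL-Number_Theory.Cong"
begin

lemma inj_mix:
  fixes n c :: "nat \<Rightarrow> nat" and g :: "nat \<Rightarrow> 'a \<Rightarrow> nat" and V :: "nat \<Rightarrow> 'a set"
  assumes "\<forall>i<k. coprime (c i) (n i)" "\<forall>i<k. n i > 0"
    "\<forall>i<k. inj_on (\<lambda>x. g i x mod n i) (V i)"
  shows "inj_on (\<lambda>x. (\<Sum>i<k. prod n {..<i} * c i * g i (x i)) mod prod n {..<k}) (PiE {..<k} V)"
  using assms
proof (induction k)
  case 0
  then show ?case by (auto intro: inj_onI)
next
  case (Suc k)
  define N where "N = prod n {..<k}"
  define S where "S = (\<lambda>x. \<Sum>i<k. prod n {..<i} * c i * g i (x i))"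
  have Npos: "N > 0" unfolding N_def using Suc.prems(2) by (auto intro: prod_pos)
  have IH: "inj_on (\<lambda>x. S x mod N) (PiE {..<k} V)"
    using Suc.IH Suc.prems unfolding S_def N_def by auto
  have Srestr: "S (restrict x {..<k}) = S x" for x
    unfolding S_def by (intro sum.cong) auto
  show ?case
  proof (rule inj_onI)
    fix x y assume x: "x \<in> PiE {..<Suc k} V" and y: "y \<in> PiE {..<Suc k} V"
      and eq: "(\<Sum>i<Suc k. prod n {..<i} * c i * g i (x i)) mod prod n {..<Suc k} =
               (\<Sum>i<Suc k. prod n {..<i} * c i * g i (y i)) mod prod n {..<Suc k}"
    have eq2: "(S x + N * (c k * g k (x k))) mod (N * n k) = (S y + N * (c k * g k (y k))) mod (N * n k)"
      using eq unfolding S_def N_def by (simp add: lessThan_Suc ac_simps)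
    have "S x mod N = S y mod N"
    proof -
      have h: "\<And>a. a mod (N * n k) mod N = a mod N" by (simp add: mod_mod_cancel)
      have "(S x + N * (c k * g k (x k))) mod N = (S y + N * (c k * g k (y k))) mod N"
        using arg_cong[OF eq2, of "\<lambda>t. t mod N"] unfolding h .
      thus ?thesis by simp
    qed
    hence eqS: "S (restrict x {..<k}) mod N = S (restrict y {..<k}) mod N" by (simp add: Srestr)
    have m1: "restrict x {..<k} \<in> PiE {..<k} V" and m2: "restrict y {..<k} \<in> PiE {..<k} V"
      using x y by (auto simp: PiE_iff)
    have r: "restrict x {..<k} = restrict y {..<k}" using inj_onD[OF IH eqS m1 m2] .
    have Sxy: "S x = S y" using Srestr[of x] Srestr[of y] r by simp
    have "[S x + N * (c k * g k (x k)) = S x + N * (c k * g k (y k))] (mod N * n k)"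
      using eq2 Sxy by (simp add: cong_def)
    hence "[N * (c k * g k (x k)) = N * (c k * g k (y k))] (mod N * n k)"
      by (simp only: cong_add_lcancel_nat)
    hence "(N * (c k * g k (x k))) mod (N * n k) = (N * (c k * g k (y k))) mod (N * n k)"
      unfolding cong_def .
    hence "N * (c k * g k (x k) mod n k) = N * (c k * g k (y k) mod n k)"
      by (simp only: mult_mod_right)
    hence "[c k * g k (x k) = c k * g k (y k)] (mod n k)" using Npos unfolding cong_def by simp
    hence "[g k (x k) = g k (y k)] (mod n k)"
      using Suc.prems(1) cong_mult_lcancel_nat by auto
    moreover have "x k \<in> V k" "y k \<in> V k" using x y by auto
    ultimately have "x k = y k" using Suc.prems(3) unfolding cong_def by (auto dest: inj_onD)
    show "x = y"
    proof
      fix i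
      show "x i = y i"
      proof (cases "i < k")
        case True
        have "restrict x {..<k} i = restrict y {..<k} i" using r by simp
        then show ?thesis using True by simp
      next
        case False
        then show ?thesis using \<open>x k = y k\<close> x y
          by (cases "i = k") (auto simp: PiE_def extensional_def)
      qed
    qed
  qed
qed

lemma mix_bound:
  fixes n :: "nat \<Rightarrow> nat" and f :: "nat \<Rightarrow> 'a \<Rightarrow> nat"
  assumes "\<forall>i<k. \<forall>z\<in>V i. f i z < n i" "x \<in> PiE {..<k} V"
  shows "(\<Sum>i<k. prod n {..<i} * f i (x i)) < prod n {..<k}"
  using assms
proof (induction k arbitrary: x)
  case 0 then show ?case by simp
next
  case (Suc k)
  have "x \<in> PiE {..<k} V \<or> True" by simp
  have IH: "(\<Sum>i<k. prod n {..<i} * f i (x i)) < prod n {..<k}"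
  proof -
    have "(\<Sum>i<k. prod n {..<i} * f i (x i)) = (\<Sum>i<k. prod n {..<i} * f i (restrict x {..<k} i))"
      by (intro sum.cong) auto
    also have "\<dots> < prod n {..<k}"
      using Suc.IH[of "restrict x {..<k}"] Suc.prems by (auto simp: PiE_iff extensional_def)
    finally show ?thesis .
  qed
  have "f k (x k) < n k" using Suc.prems by auto
  hence "f k (x k) + 1 \<le> n k" by simp
  hence "prod n {..<k} * (f k (x k) + 1) \<le> prod n {..<k} * n k" by (rule mult_left_mono) simp
  thus ?case using IH by (simp add: lessThan_Suc algebra_simps)
qed

lemma sum_PiE_coord:
  fixes h :: "'a \<Rightarrow> nat"
  assumes "finite A" "\<And>x. x \<in> A \<Longrightarrow> finite (B x)" "i \<in> A"
  shows "(\<Sum>y\<in>PiE A B. h (y i)) = (\<Sum>z\<in>B i. h z) * (\<Prod>j\<in>A-{i}. card (B j))"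
proof -
  have "(\<Sum>y\<in>PiE A B. h (y i)) = (\<Sum>y\<in>PiE A B. \<Prod>j\<in>A. (if j = i then h (y j) else 1))"
    using assms by (intro sum.cong) (auto simp: prod.delta)
  also have "\<dots> = (\<Prod>j\<in>A. \<Sum>z\<in>B j. (if j = i then h z else 1))"
    using prod_sum_PiE[of A B "\<lambda>j z. if j = i then h z else 1"] assms by simp
  also have "\<dots> = (\<Sum>z\<in>B i. h z) * (\<Prod>j\<in>A-{i}. \<Sum>z\<in>B j. (if j = i then h z else 1))"
    using assms by (simp add: prod.remove)
  also have "(\<Prod>j\<in>A-{i}. \<Sum>z\<in>B j. (if j = i then h z else 1)) = (\<Prod>j\<in>A-{i}. card (B j))"
    by (intro prod.cong) auto
  finally show ?thesis .
qed

theorem mainTheorem14: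
  fixes k :: nat and V :: "nat \<Rightarrow> 'a set" and E :: "nat \<Rightarrow> 'a \<Rightarrow> 'a \<Rightarrow> bool"
    and r n :: "nat \<Rightarrow> nat"
  assumes graphs: "\<And>i. i < k \<Longrightarrow> simple_graph (V i) (E i)"
    and card: "\<And>i. i < k \<Longrightarrow> card (V i) = n i"
    and reg: "\<And>i. i < k \<Longrightarrow> regular (V i) (E i) (r i)"
    and cop: "\<And>i. i < k \<Longrightarrow> gcd (n i) (\<Prod>j\<in>{..<k} - {i}. r j) = 1"
    and dam: "\<And>i. i < k \<Longrightarrow> Zn_distance_antimagic (V i) (E i)"
  shows "Zn_distance_antimagic (dprod_V k V) (dprod_E k E)"
proof -
  have fin: "\<And>i. i < k \<Longrightarrow> finite (V i)" using graphs unfolding simple_graph_def by blast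
  show ?thesis
  proof (cases "\<exists>i<k. V i = {}")
    case True
    then have "dprod_V k V = {}" unfolding dprod_V_def by (auto simp: PiE_eq_empty_iff)
    thus ?thesis unfolding Zn_distance_antimagic_def by (simp add: bij_betw_def)
  next
    case False
    hence npos: "\<forall>i<k. n i > 0" using fin card by (metis card_gt_0_iff)
    define P where "P = PiE {..<k} V"
    define W where "W = (\<lambda>F i z. \<Sum>y\<in>nbhd (V i) (E i) z. (F i y :: nat))"
    define R where "R = (\<lambda>i. \<Prod>j\<in>{..<k} - {i}. r j)"
    have "\<forall>i. \<exists>f. i < k \<longrightarrow> bij_betw f (V i) {0..<n i} \<and>
            inj_on (\<lambda>x. (\<Sum>y\<in>nbhd (V i) (E i) x. f y) mod n i) (V i)"
      using dam card unfolding Zn_distance_antimagic_def by metis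
    from choice[OF this] obtain F where F: "\<forall>i. i < k \<longrightarrow> bij_betw (F i) (V i) {0..<n i} \<and>
            inj_on (\<lambda>x. (\<Sum>y\<in>nbhd (V i) (E i) x. F i y) mod n i) (V i)" by blast
    define lab where "lab = (\<lambda>x. \<Sum>i<k. prod n {..<i} * F i (x i))"
    have cardP: "card P = prod n {..<k}" unfolding P_def using card by (simp add: card_PiE)
    have finP: "finite P" unfolding P_def using fin by (auto intro: finite_PiE)
    have Fb: "\<forall>i<k. \<forall>z\<in>V i. F i z < n i" using F by (metis atLeastLessThan_iff bij_betwE)
    have lab_lt: "lab x < prod n {..<k}" if "x \<in> P" for x
      unfolding lab_def using mix_bound[OF Fb] that P_def by auto
    have Finj: "\<forall>i<k. inj_on (\<lambda>x. F i x mod n i) (V i)"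
    proof (intro allI impI)
      fix i assume i: "i < k"
      have "inj_on (F i) (V i)" using F i by (simp add: bij_betw_def)
      moreover have "\<And>x. x \<in> V i \<Longrightarrow> F i x mod n i = F i x" using Fb i by simp
      ultimately show "inj_on (\<lambda>x. F i x mod n i) (V i)"
        using inj_on_cong[of "V i" "\<lambda>x. F i x mod n i" "F i"] by simp
    qed
    have "inj_on (\<lambda>x. (\<Sum>i<k. prod n {..<i} * (\<lambda>_. 1) i * F i (x i)) mod prod n {..<k}) P"
      unfolding P_def by (rule inj_mix[of k "\<lambda>_. 1" n F V, OF _ npos Finj]) simp
    hence inj_lab: "inj_on lab P"
      using lab_lt unfolding lab_def by (simp add: inj_on_def)
    have "lab ` P = {0..<prod n {..<k}}"
    proof (rule card_subset_eq)
      show "lab ` P \<subseteq> {0..<prod n {..<k}}" using lab_lt by auto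
      show "card (lab ` P) = card {0..<prod n {..<k}}" using inj_lab cardP by (simp add: card_image)
    qed simp
    hence bij: "bij_betw lab P {0..<card P}" using inj_lab cardP by (simp add: bij_betw_def)
    have nb: "nbhd P (dprod_E k E) x = PiE {..<k} (\<lambda>i. nbhd (V i) (E i) (x i))" if x: "x \<in> P" for x
    proof -
      have "\<And>i a b. i < k \<Longrightarrow> E i a b \<Longrightarrow> b \<in> V i" using graphs unfolding simple_graph_def by blast
      thus ?thesis using x unfolding P_def nbhd_def dprod_E_def by (auto simp: PiE_iff extensional_def)
    qed
    have weight: "(\<Sum>y\<in>nbhd P (dprod_E k E) x. lab y) = (\<Sum>i<k. prod n {..<i} * R i * W F i (x i))"
      if x: "x \<in> P" for x
    proof -
      let ?B = "\<lambda>i. nbhd (V i) (E i) (x i)"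
      have finB: "\<And>i. i \<in> {..<k} \<Longrightarrow> finite (?B i)" using fin unfolding nbhd_def by auto
      have "(\<Sum>y\<in>nbhd P (dprod_E k E) x. lab y) = (\<Sum>y\<in>PiE {..<k} ?B. \<Sum>i<k. prod n {..<i} * F i (y i))"
        using nb[OF x] unfolding lab_def by simp
      also have "\<dots> = (\<Sum>i<k. prod n {..<i} * (\<Sum>y\<in>PiE {..<k} ?B. F i (y i)))"
        by (simp add: sum.swap[of _ _ "{..<k}"] sum_distrib_left)
      also have "\<dots> = (\<Sum>i<k. prod n {..<i} * (W F i (x i) * (\<Prod>j\<in>{..<k}-{i}. card (?B j))))"
      proof (intro sum.cong refl)
        fix i assume i: "i \<in> {..<k}"
        show "prod n {..<i} * (\<Sum>y\<in>PiE {..<k} ?B. F i (y i)) = prod n {..<i} * (W F i (x i) * (\<Prod>j\<in>{..<k}-{i}. card (?B j)))"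
          using sum_PiE_coord[of "{..<k}" ?B i "F i"] finB i by (simp add: W_def)
      qed
      also have "\<dots> = (\<Sum>i<k. prod n {..<i} * R i * W F i (x i))"
      proof (intro sum.cong refl)
        fix i assume "i \<in> {..<k}"
        have "(\<Prod>j\<in>{..<k}-{i}. card (?B j)) = R i"
          unfolding R_def using x reg unfolding P_def regular_def by (intro prod.cong) auto
        thus "prod n {..<i} * (W F i (x i) * (\<Prod>j\<in>{..<k}-{i}. card (?B j))) = prod n {..<i} * R i * W F i (x i)"
          by simp
      qed
      finally show ?thesis .
    qed
    have "inj_on (\<lambda>x. (\<Sum>i<k. prod n {..<i} * R i * W F i (x i)) mod prod n {..<k}) P"
      unfolding P_def
    proof (rule inj_mix)
      show "\<forall>i<k. coprime (R i) (n i)" using cop unfolding R_def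
        by (simp add: coprime_iff_gcd_eq_1 gcd.commute)
      show "\<forall>i<k. n i > 0" by (rule npos)
      show "\<forall>i<k. inj_on (\<lambda>x. W F i x mod n i) (V i)" using F unfolding W_def by blast
    qed
    hence "inj_on (\<lambda>x. (\<Sum>y\<in>nbhd P (dprod_E k E) x. lab y) mod card P) P"
      using weight cardP by (simp add: inj_on_def)
    thus ?thesis using bij unfolding Zn_distance_antimagic_def P_def[symmetric] dprod_V_def by blast
  qed
qed

end
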